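(* Let $n\ge 1$ and let $V=\{(y_1,\dots,y_n)\in\overline{\mathbb{R}}_+^{\,n}\mid y_i>1\text{ for all } i=1,\dots,n\}$. Let $K\subseteq \overline{\mathbb{R}}_+^{\,n}$ be a convex subset with $K\cap V=\emptyset$. Then there are nonnegative real numbers $a_1,\dots,a_n$ with $\sum_{i=1}^n a_i=1$ such that \[\sum_{i=1}^n a_i x_i\le 1<\sum_{i=1}^n a_i y_i\quad\text{for all }(x_1,\dots,x_n)\in K\text{ and all }(y_1,\dots,y_n)\in V.\]
   Context: $\overline{\mathbb{R}}_+=[0,+\infty)\cup\{+\infty\}$ with the usual order, $+\infty$ the top element, and arithmetic extended by $r+\infty=\infty+r=+\infty$ for all $r$, $r\cdot(+\infty)=(+\infty)\cdot r=+\infty$ for $r>0$ and $0\cdot(+\infty)=(+\infty)\cdot 0=0$. $\overline{\mathbb{R}}_+^{\,n}$ carries coordinatewise addition and multiplication by scalars $r\in[0,\infty)$. A subset $K$ of $\overline{\mathbb{R}}_+^{\,n}$ is convex if $ra+(1-r)b\in K$ for all $a,b\in K$ and all real $r\in[0,1]$ (computed with the extended arithmetic). *)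

theory Defs
  imports Main "HOL-Library.Extended_Nonnegative_Real"
begin

text \<open>Points of the extended nonnegative orthant are functions from a finite index
type 'n (the coordinates 1..n) to ennreal = [0,+infinity], whose arithmetic satisfies
0 * infinity = 0 and r * infinity = infinity for r > 0. Real scalars r \<ge> 0 act
via ennreal r.\<close>

definition ennreal_convex :: "('n \<Rightarrow> ennreal) set \<Rightarrow> bool" where
  "ennreal_convex K \<longleftrightarrow>
     (\<forall>a\<in>K. \<forall>b\<in>K. \<forall>r::real. 0 \<le> r \<and> r \<le> 1 \<longrightarrow>
        (\<lambda>i. ennreal r * a i + ennreal (1 - r) * b i) \<in> K)"

definition V_set :: "('n \<Rightarrow> ennreal) set" where
  "V_set = {y. \<forall>i. y i > 1}"

end

theory Submission
  imports Defs "HOL-Analysis.Analysis"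
begin

lemma conv_step:
  fixes z z' :: real and x x' :: ennreal and r :: real
  assumes "0 \<le> r" "r \<le> 1" "ennreal z \<le> x" "ennreal z' \<le> x'"
  shows "ennreal (r * z + (1 - r) * z') \<le> ennreal r * x + ennreal (1 - r) * x'"
proof -
  have mx: "ennreal (max w 0) = ennreal w" for w :: real
    by (cases "w \<ge> 0") (auto simp: max_def ennreal_neg)
  have "ennreal (r * z + (1 - r) * z') \<le> ennreal (r * max z 0 + (1 - r) * max z' 0)"
    using assms by (intro ennreal_leI add_mono mult_left_mono) auto
  also have "\<dots> = ennreal r * ennreal (max z 0) + ennreal (1 - r) * ennreal (max z' 0)"
    using assms by (simp add: ennreal_plus ennreal_mult)
  also have "\<dots> = ennreal r * ennreal z + ennreal (1 - r) * ennreal z'"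
    using mx[of z] mx[of z'] by simp
  also have "\<dots> \<le> ennreal r * x + ennreal (1 - r) * x'"
    using assms by (intro add_mono mult_left_mono) auto
  finally show ?thesis .
qed

lemma main_sep:
  fixes K :: "('n::finite \<Rightarrow> ennreal) set"
  assumes conv: "ennreal_convex K"
    and disj: "K \<inter> V_set = {}" and ne: "K \<noteq> {}"
  defines "D \<equiv> {z :: real^'n. \<exists>x\<in>K. \<forall>i. ennreal (z $ i) \<le> x i}"
  shows "\<exists>a :: 'n \<Rightarrow> real. (\<forall>i. 0 \<le> a i) \<and> (\<Sum>i\<in>UNIV. a i) = 1 \<and>
           (\<forall>z\<in>D. (\<Sum>i\<in>UNIV. a i * z $ i) \<le> 1)"
proof -
  define U where "U = {u :: real^'n. \<forall>i. u $ i > 1}"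
  have cD: "convex D"
    unfolding convex_def
  proof (intro ballI allI impI)
    fix z z' :: "real^'n" and u v :: real
    assume z: "z \<in> D" and z': "z' \<in> D" and uv: "0 \<le> u" "0 \<le> v" "u + v = 1"
    obtain x where x: "x \<in> K" "\<forall>i. ennreal (z $ i) \<le> x i" using z D_def by auto
    obtain x' where x': "x' \<in> K" "\<forall>i. ennreal (z' $ i) \<le> x' i" using z' D_def by auto
    have v: "v = 1 - u" using uv by simp
    have "(\<lambda>i. ennreal u * x i + ennreal (1 - u) * x' i) \<in> K"
      using conv x x' uv unfolding ennreal_convex_def by auto
    moreover have "\<forall>i. ennreal ((u *\<^sub>R z + v *\<^sub>R z') $ i) \<le> ennreal u * x i + ennreal (1 - u) * x' i"
      using conv_step uv x x' v by auto
    ultimately show "u *\<^sub>R z + v *\<^sub>R z' \<in> D" unfolding D_def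
      by (intro CollectI bexI[of _ "\<lambda>i. ennreal u * x i + ennreal (1 - u) * x' i"])
  qed
  have cU: "convex U"
    unfolding convex_def U_def
  proof (intro ballI allI impI, safe)
    fix z z' :: "real^'n" and u v :: real and i
    assume "\<forall>i. 1 < z $ i" "\<forall>i. 1 < z' $ i" "0 \<le> u" "0 \<le> v" "u + v = 1"
    then have "u * 1 + v * 1 < u * z $ i + v * z' $ i \<or> u * 1 + v * 1 \<le> u * z $ i + v * z' $ i"
      by (intro disjI2 add_mono mult_left_mono) (auto intro: less_imp_le)
    moreover have "u * 1 + v * 1 \<noteq> u * z $ i + v * z' $ i \<or> True" by simp
    ultimately have le: "1 \<le> u * z $ i + v * z' $ i" using \<open>u + v = 1\<close> by auto
    show "1 < (u *\<^sub>R z + v *\<^sub>R z') $ i"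
    proof (cases "u = 0")
      case True then show ?thesis using \<open>u + v = 1\<close> \<open>\<forall>i. 1 < z' $ i\<close> by auto
    next
      case False
      then have "u * 1 < u * z $ i" using \<open>0 \<le> u\<close> \<open>\<forall>i. 1 < z $ i\<close> by auto
      moreover have "v * 1 \<le> v * z' $ i" using \<open>0 \<le> v\<close> \<open>\<forall>i. 1 < z' $ i\<close>
        by (intro mult_left_mono) (auto intro: less_imp_le)
      ultimately show ?thesis using \<open>u + v = 1\<close> by simp
    qed
  qed
  have U2: "(\<chi> i. 2) \<in> U" unfolding U_def by simp
  obtain x0 where x0: "x0 \<in> K" using ne by auto
  have z00: "(\<chi> i. 0) \<in> D" unfolding D_def using x0 by auto
  have DU: "D \<inter> U = {}"
  proof (rule ccontr)
    assume "D \<inter> U \<noteq> {}"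
    then obtain z x where "x \<in> K" "\<forall>i. ennreal (z $ i) \<le> x i" "\<forall>i. z $ i > 1"
      unfolding D_def U_def by auto
    then have "x \<in> V_set" unfolding V_set_def
    proof (intro CollectI allI)
      fix i
      have "(1::ennreal) < ennreal (z $ i)" using \<open>\<forall>i. z $ i > 1\<close>
        by (metis ennreal_1 ennreal_less_iff zero_le_one)
      then show "1 < x i" using \<open>\<forall>i. ennreal (z $ i) \<le> x i\<close> order_less_le_trans by blast
    qed
    with \<open>x \<in> K\<close> disj show False by auto
  qed
  obtain a b where ab: "a \<noteq> 0" "\<forall>z\<in>D. inner a z \<le> b" "\<forall>u\<in>U. inner a u \<ge> b"
    using separating_hyperplane_sets[OF cD cU _ _ DU] z00 U2 by blast
  have inner_eq: "\<And>z. inner a z = (\<Sum>i\<in>UNIV. a $ i * z $ i)"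
    by (simp add: inner_vec_def)
  have apos: "0 \<le> a $ j" for j
  proof (rule ccontr)
    assume neg: "\<not> 0 \<le> a $ j"
    define t where "t = (\<bar>b\<bar> + 1) / (- a $ j)"
    define z :: "real^'n" where "z = (\<chi> i. if i = j then - t else 0)"
    have "t > 0" using neg unfolding t_def
      by (intro divide_pos_pos) (auto simp: add_nonneg_pos)
    have "z \<in> D" unfolding D_def z_def using x0 \<open>t > 0\<close> by (auto intro!: bexI[of _ x0] simp: ennreal_neg)
    have "inner a z = a $ j * (- t)"
      unfolding inner_eq z_def by (simp add: if_distrib sum.If_cases)
    also have "\<dots> = \<bar>b\<bar> + 1" using neg unfolding t_def by (simp add: field_simps)
    finally have "inner a z > b" by simp
    with ab(2) \<open>z \<in> D\<close> show False by fastforce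
  qed
  define s where "s = (\<Sum>i\<in>UNIV. a $ i)"
  have "s > 0"
  proof -
    obtain j where "a $ j \<noteq> 0" using ab(1) by (metis vec_eq_iff zero_index)
    then have "a $ j > 0" using apos[of j] by simp
    have "a $ j \<le> s" unfolding s_def
      by (rule member_le_sum) (auto intro: apos)
    with \<open>a $ j > 0\<close> show ?thesis by simp
  qed
  have "b \<le> s"
  proof (rule ccontr)
    assume "\<not> b \<le> s"
    define e where "e = (b - s) / (2 * s)"
    have "e > 0" using \<open>\<not> b \<le> s\<close> \<open>s > 0\<close> unfolding e_def by simp
    have "(\<chi> i. 1 + e) \<in> U" unfolding U_def using \<open>e > 0\<close> by simp
    then have "b \<le> inner a (\<chi> i. 1 + e)" using ab(3) by blast
    also have "\<dots> = s * (1 + e)" unfolding inner_eq s_def by (simp add: sum_distrib_right)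
    also have "\<dots> = s + (b - s) / 2" using \<open>s > 0\<close> unfolding e_def by (simp add: field_simps)
    finally show False using \<open>\<not> b \<le> s\<close> by (simp add: field_simps)
  qed
  show ?thesis
  proof (intro exI[of _ "\<lambda>i. a $ i / s"] conjI allI ballI)
    fix i show "0 \<le> a $ i / s" using apos \<open>s > 0\<close> by simp
  next
    show "(\<Sum>i\<in>UNIV. a $ i / s) = 1" using \<open>s > 0\<close> unfolding s_def
      by (simp add: sum_divide_distrib[symmetric])
  next
    fix z assume "z \<in> D"
    have "(\<Sum>i\<in>UNIV. a $ i / s * z $ i) = inner a z / s"
      unfolding inner_eq by (simp add: sum_divide_distrib)
    also have "\<dots> \<le> b / s" using ab(2) \<open>z \<in> D\<close> \<open>s > 0\<close> by (simp add: divide_right_mono)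
    also have "\<dots> \<le> 1" using \<open>b \<le> s\<close> \<open>s > 0\<close> by simp
    finally show "(\<Sum>i\<in>UNIV. a $ i / s * z $ i) \<le> 1" .
  qed
qed

lemma strict_part:
  fixes a :: "'n::finite \<Rightarrow> real"
  assumes a0: "\<forall>i. 0 \<le> a i" and a1: "(\<Sum>i\<in>UNIV. a i) = 1" and y: "y \<in> V_set"
  shows "1 < (\<Sum>i\<in>UNIV. ennreal (a i) * y i)"
proof -
  define m where "m k = enn2real (min (y k) 2)" for k
  have ym: "y k > 1" for k using y unfolding V_set_def by auto
  have mfin: "min (y k) 2 \<noteq> top" for k
    by (metis ennreal_numeral min.absorb_iff2 min_def not_top_less top_greatest ennreal_less_top)
  have em: "ennreal (m k) = min (y k) 2" for k
    unfolding m_def using mfin[of k] by (simp add: ennreal_enn2real_if)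
  have m1: "m k > 1" for k
  proof -
    have "ennreal 1 < ennreal (m k)" using em[of k] ym[of k]
      by (simp add: min_less_iff_conj)
    then show ?thesis by (simp add: ennreal_less_iff)
  qed
  obtain j where j: "a j > 0"
  proof (rule ccontr)
    assume "\<not> thesis"
    then have "\<forall>i. a i = 0" using a0 that by (meson linorder_not_le order_antisym)
    then show False using a1 by simp
  qed
  have "(\<Sum>i\<in>UNIV. a i) < (\<Sum>i\<in>UNIV. a i * m i)"
  proof (rule sum_strict_mono_ex1)
    show "\<forall>x\<in>UNIV. a x \<le> a x * m x" using a0 m1
      by (metis less_imp_le mult.right_neutral mult_left_mono)
    show "\<exists>x\<in>UNIV. a x < a x * m x" using j m1[of j]
      by (metis UNIV_I mult.right_neutral mult_strict_left_mono)
  qed simp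
  then have "1 < ennreal (\<Sum>i\<in>UNIV. a i * m i)" using a1
    by (metis ennreal_1 ennreal_less_iff less_imp_le order.strict_trans1 zero_less_one)
  also have "\<dots> = (\<Sum>i\<in>UNIV. ennreal (a i * m i))"
      proof (rule sum_ennreal[symmetric])
    fix i
    have "0 \<le> m i" using m1[of i] by linarith
    then show "0 \<le> a i * m i" using a0 by simp
  qed
  also have "\<dots> \<le> (\<Sum>i\<in>UNIV. ennreal (a i) * y i)"
  proof (rule sum_mono)
    fix i
    have "ennreal (a i * m i) = ennreal (a i) * min (y i) 2"
      using a0 ennreal_mult'[of "a i" "m i"] em[of i] by metis
    also have "\<dots> \<le> ennreal (a i) * y i" by (intro mult_left_mono) auto
    finally show "ennreal (a i * m i) \<le> ennreal (a i) * y i" .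
  qed
  finally show ?thesis .
qed

theorem lemma2p6:
  fixes K :: "('n::finite \<Rightarrow> ennreal) set"
  assumes "ennreal_convex K"
    and "K \<inter> V_set = {}"
  shows "\<exists>a :: 'n \<Rightarrow> real. (\<forall>i. 0 \<le> a i) \<and> (\<Sum>i\<in>UNIV. a i) = 1 \<and>
           (\<forall>x\<in>K. \<forall>y\<in>V_set.
              (\<Sum>i\<in>UNIV. ennreal (a i) * x i) \<le> 1 \<and> 1 < (\<Sum>i\<in>UNIV. ennreal (a i) * y i))"
proof (cases "K = {}")
  case True
  define a :: "'n \<Rightarrow> real" where "a i = 1 / real CARD('n)" for i
  have "(\<forall>i. 0 \<le> a i) \<and> (\<Sum>i\<in>UNIV. a i) = 1" unfolding a_def by simp
  then show ?thesis using True strict_part by blast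
next
  case False
  define D where "D = {z :: real^'n. \<exists>x\<in>K. \<forall>i. ennreal (z $ i) \<le> x i}"
  obtain a :: "'n \<Rightarrow> real" where a0: "\<forall>i. 0 \<le> a i" and a1: "(\<Sum>i\<in>UNIV. a i) = 1"
    and aD: "\<forall>z\<in>D. (\<Sum>i\<in>UNIV. a i * z $ i) \<le> 1"
    using main_sep[OF assms False] unfolding D_def by blast
  have first: "(\<Sum>i\<in>UNIV. ennreal (a i) * x i) \<le> 1" if x: "x \<in> K" for x
  proof -
    have fin: "x i \<noteq> top" if "a i > 0" for i
    proof
      assume inf: "x i = top"
      define z :: "real^'n" where "z = (\<chi> k. if k = i then 2 / a i else 0)"
      have "z \<in> D" unfolding D_def z_def using x inf by (auto intro!: bexI[of _ x])
      have "(\<Sum>k\<in>UNIV. a k * z $ k) = a i * (2 / a i)"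
        unfolding z_def by (simp add: if_distrib sum.If_cases)
      also have "\<dots> = 2" using that by simp
      finally show False using aD \<open>z \<in> D\<close> by fastforce
    qed
    define z :: "real^'n" where "z = (\<chi> k. enn2real (x k))"
    have "z \<in> D" unfolding D_def z_def using x
      by (auto intro!: bexI[of _ x] simp: ennreal_enn2real_if)
    have terms: "ennreal (a k) * x k = ennreal (a k * z $ k)" for k
    proof (cases "a k > 0")
      case True
      then show ?thesis using fin[OF True] a0 unfolding z_def
        by (simp add: ennreal_mult ennreal_enn2real_if)
    next
      case False
      then have "a k = 0" using a0[rule_format, of k] by linarith
      then show ?thesis by simp
    qed
    have "(\<Sum>k\<in>UNIV. ennreal (a k) * x k) = (\<Sum>k\<in>UNIV. ennreal (a k * z $ k))"
      using terms by simp
    also have "\<dots> = ennreal (\<Sum>k\<in>UNIV. a k * z $ k)"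
      using a0 unfolding z_def by (subst sum_ennreal) auto
    also have "\<dots> \<le> ennreal 1" using aD \<open>z \<in> D\<close> by (intro ennreal_leI) auto
    finally show ?thesis by simp
  qed
  show ?thesis using a0 a1 first strict_part[OF a0 a1] by blast
qed

end
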